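(* Let $\Delta,\Sigma$ be alphabets, $\varphi:\Delta\to2^{\Sigma^*}$ a regular language substitution, and $K_1,K_2\subseteq\Delta^+$ regular languages such that $\mathcal{R}_1=(K_1,\varphi)$ and $\mathcal{R}_2=(K_2,\varphi)$ are finite. Then the symmetric difference $\mathcal{R}_1\,\Delta\,\mathcal{R}_2=(\mathcal{R}_1\cup\mathcal{R}_2)-(\mathcal{R}_1\cap\mathcal{R}_2)$ is a finite rational set of regular languages that can be expressed with the language substitution $\varphi$, i.e. it equals $(K_3,\varphi)$ for some regular $K_3\subseteq\Delta^+$.
   Context: A regular language substitution $\varphi:\Delta\to2^{\Sigma^*}$ maps each symbol to a regular language over $\Sigma$, extended by $\varphi(\delta w)=\varphi(\delta)\varphi(w)$. For $K\subseteq\Delta^+$, $(K,\varphi)=\{\varphi(w)\mid w\in K\}$; when $K$ is regular this set is a rational set of regular languages. *)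

theory Defs
  imports Main
begin

text \<open>Alphabets are modelled as finite types; words are lists; languages are sets of lists.\<close>

definition conc :: "'a list set \<Rightarrow> 'a list set \<Rightarrow> 'a list set" where
  "conc A B = {u @ v | u v. u \<in> A \<and> v \<in> B}"

inductive_set kstar :: "'a list set \<Rightarrow> 'a list set" for A :: "'a list set" where
  kstar_Nil: "[] \<in> kstar A"
| kstar_app: "u \<in> A \<Longrightarrow> v \<in> kstar A \<Longrightarrow> u @ v \<in> kstar A"

inductive regular :: "'a list set \<Rightarrow> bool" where
  reg_empty: "regular {}"
| reg_eps: "regular {[]}"
| reg_letter: "regular {[a]}"
| reg_union: "regular A \<Longrightarrow> regular B \<Longrightarrow> regular (A \<union> B)"
| reg_conc: "regular A \<Longrightarrow> regular B \<Longrightarrow> regular (conc A B)"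
| reg_star: "regular A \<Longrightarrow> regular (kstar A)"

primrec subst_word :: "('d \<Rightarrow> 's list set) \<Rightarrow> 'd list \<Rightarrow> 's list set" where
  "subst_word \<phi> [] = {[]}"
| "subst_word \<phi> (d # w) = conc (\<phi> d) (subst_word \<phi> w)"

definition regular_subst :: "('d \<Rightarrow> 's list set) \<Rightarrow> bool" where
  "regular_subst \<phi> \<longleftrightarrow> (\<forall>d. regular (\<phi> d))"

definition subst_set :: "'d list set \<Rightarrow> ('d \<Rightarrow> 's list set) \<Rightarrow> 's list set set" where
  "subst_set K \<phi> = subst_word \<phi> ` K"

definition plus_words :: "'d list set" where
  "plus_words = {w. w \<noteq> []}"

end

theory Submission
  imports Defs
begin

lemma regular_word: "regular {w}"
proof (induction w)
  case Nil then show ?case by (rule reg_eps)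
next
  case (Cons a w)
  have "conc {[a]} {w} = {a # w}" by (auto simp: conc_def)
  then show ?case using reg_conc[OF reg_letter Cons] by metis
qed

lemma regular_finite: "finite A \<Longrightarrow> regular (A :: 'a list set)"
proof (induction A rule: finite_induct)
  case empty then show ?case by (rule reg_empty)
next
  case (insert x F)
  have "insert x F = {x} \<union> F" by auto
  then show ?case using reg_union[OF regular_word insert(3)] by metis
qed

theorem proposition11:
  fixes \<phi> :: "'d::finite \<Rightarrow> 's::finite list set"
    and K1 K2 :: "'d list set"
  assumes "regular_subst \<phi>"
    and "regular K1" and "K1 \<subseteq> plus_words"
    and "regular K2" and "K2 \<subseteq> plus_words"
    and "finite (subst_set K1 \<phi>)"
    and "finite (subst_set K2 \<phi>)"
  shows "finite ((subst_set K1 \<phi> \<union> subst_set K2 \<phi>) - (subst_set K1 \<phi> \<inter> subst_set K2 \<phi>))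
    \<and> (\<exists>K3. regular K3 \<and> K3 \<subseteq> plus_words \<and>
          subst_set K3 \<phi> = (subst_set K1 \<phi> \<union> subst_set K2 \<phi>) - (subst_set K1 \<phi> \<inter> subst_set K2 \<phi>))"
proof -
  define S where "S = (subst_set K1 \<phi> \<union> subst_set K2 \<phi>) - (subst_set K1 \<phi> \<inter> subst_set K2 \<phi>)"
  have fin: "finite S" using assms(6,7) unfolding S_def by auto
  define f where "f L = (SOME w. w \<in> K1 \<union> K2 \<and> subst_word \<phi> w = L)" for L
  have fL: "f L \<in> K1 \<union> K2 \<and> subst_word \<phi> (f L) = L" if "L \<in> S" for L
  proof -
    have "\<exists>w. w \<in> K1 \<union> K2 \<and> subst_word \<phi> w = L"
      using that unfolding S_def subst_set_def by auto
    then show ?thesis unfolding f_def by (rule someI_ex)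
  qed
  define K3 where "K3 = f ` S"
  have "regular K3" unfolding K3_def using fin by (intro regular_finite) auto
  moreover have "K3 \<subseteq> plus_words" unfolding K3_def using fL assms(3,5) by blast
  moreover have "subst_set K3 \<phi> = S"
    unfolding subst_set_def K3_def image_image using fL by (auto simp: image_iff)
  ultimately show ?thesis using fin unfolding S_def by blast
qed

end
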